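(* Let $\Phi = \{\xi = (\tau_L,\delta_L,\tau_R,\delta_R) \in \mathbb{R}^4 : \tau_L > |\delta_L + 1|,\ \tau_R < -|\delta_R+1|\}$, $\Phi^{(3)} = \{\xi \in \Phi : \delta_L > 0, \delta_R < 0\}$, $\Phi^{(4)} = \{\xi \in \Phi : \delta_L < 0, \delta_R > 0\}$. Let $\alpha(\xi) = \tau_L\tau_R + (\delta_L-1)(\delta_R-1)$ and $g(\xi) = (\tau_R^2 - 2\delta_R,\ \delta_R^2,\ \tau_L\tau_R - \delta_L - \delta_R,\ \delta_L\delta_R)$. For $\xi \in \Phi$ let $\lambda_L^u>1$ be the eigenvalue of $\begin{bmatrix}\tau_L & 1\\ -\delta_L & 0\end{bmatrix}$ of modulus greater than one, $\lambda_R^u<-1$ the eigenvalue of $\begin{bmatrix}\tau_R & 1\\ -\delta_R & 0\end{bmatrix}$ of modulus greater than one, and $$\phi^+(\xi) = \delta_R - \big(\tau_R + \delta_L + \delta_R - (1+\tau_R)\lambda_L^u\big)\lambda_L^u,\qquad \phi^-(\xi) = \delta_R - \big(\delta_R + \tau_R - (1+\lambda_R^u)\lambda_L^u\big)\lambda_L^u,$$ $\phi_{\min}(\xi) = \min[\phi^+(\xi),\phi^-(\xi)]$. For $n\ge 0$ let $$\mathcal{R}^{(3)}_n = \{\xi \in \Phi^{(3)} : \phi_{\min}(g^n(\xi)) > 0,\ \phi_{\min}(g^{n+1}(\xi)) \le 0,\ \alpha(\xi) < 0\},$$ and for $n \ge 1$ let $$\mathcal{R}^{(4)}_n = \{\xi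 \in \Phi^{(4)} : \phi_{\min}(g^n(\xi)) > 0,\ \phi_{\min}(g^{n+1}(\xi)) \le 0,\ \alpha(\xi) < 0,\ \alpha(g(\xi)) < 0\}.$$ If $\xi \in \mathcal{R}^{(4)}_n$ with $n \ge 1$, then $g(\xi) \in \mathcal{R}^{(3)}_{n-1}$.
   Context: $g^n$ denotes the $n$-fold composition of $g$; the conditions in the set definitions are understood to include that the relevant iterates $g^k(\xi)$ lie in $\Phi$, so that $\phi_{\min}$ is defined at them. *)

theory Defs
  imports Complex_Main
begin

type_synonym param = "real \<times> real \<times> real \<times> real"

definition Phi :: "param set" where
  "Phi = {(tL, dL, tR, dR). tL > \<bar>dL + 1\<bar> \<and> tR < - \<bar>dR + 1\<bar>}"

definition Phi3 :: "param set" where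
  "Phi3 = {(tL, dL, tR, dR). (tL, dL, tR, dR) \<in> Phi \<and> dL > 0 \<and> dR < 0}"

definition Phi4 :: "param set" where
  "Phi4 = {(tL, dL, tR, dR). (tL, dL, tR, dR) \<in> Phi \<and> dL < 0 \<and> dR > 0}"

definition alpha :: "param \<Rightarrow> real" where
  "alpha = (\<lambda>(tL, dL, tR, dR). tL * tR + (dL - 1) * (dR - 1))"

definition g :: "param \<Rightarrow> param" where
  "g = (\<lambda>(tL, dL, tR, dR). (tR\<^sup>2 - 2 * dR, dR\<^sup>2, tL * tR - dL - dR, dL * dR))"

text \<open>Characteristic polynomial of the companion matrix [[t, 1], [-d, 0]]:
  det [[t - l, 1], [-d, -l]] = (t - l) * (- l) + d.\<close>
definition charpoly :: "real \<Rightarrow> real \<Rightarrow> real \<Rightarrow> real" where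
  "charpoly t d l = (t - l) * (- l) - 1 * (- d)"

definition lamLu :: "param \<Rightarrow> real" where
  "lamLu = (\<lambda>(tL, dL, tR, dR). THE l. \<bar>l\<bar> > 1 \<and> charpoly tL dL l = 0)"

definition lamRu :: "param \<Rightarrow> real" where
  "lamRu = (\<lambda>(tL, dL, tR, dR). THE l. \<bar>l\<bar> > 1 \<and> charpoly tR dR l = 0)"

definition phi_plus :: "param \<Rightarrow> real" where
  "phi_plus = (\<lambda>(tL, dL, tR, dR).
     dR - (tR + dL + dR - (1 + tR) * lamLu (tL, dL, tR, dR)) * lamLu (tL, dL, tR, dR))"

definition phi_minus :: "param \<Rightarrow> real" where
  "phi_minus = (\<lambda>(tL, dL, tR, dR).
     dR - (dR + tR - (1 + lamRu (tL, dL, tR, dR)) * lamLu (tL, dL, tR, dR)) * lamLu (tL, dL, tR, dR))"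

definition phi_min :: "param \<Rightarrow> real" where
  "phi_min xi = min (phi_plus xi) (phi_minus xi)"

definition R3 :: "nat \<Rightarrow> param set" where
  "R3 n = {xi \<in> Phi3.
     (g ^^ n) xi \<in> Phi \<and> phi_min ((g ^^ n) xi) > 0 \<and>
     (g ^^ (n + 1)) xi \<in> Phi \<and> phi_min ((g ^^ (n + 1)) xi) \<le> 0 \<and>
     alpha xi < 0}"

definition R4 :: "nat \<Rightarrow> param set" where
  "R4 n = {xi \<in> Phi4.
     (g ^^ n) xi \<in> Phi \<and> phi_min ((g ^^ n) xi) > 0 \<and>
     (g ^^ (n + 1)) xi \<in> Phi \<and> phi_min ((g ^^ (n + 1)) xi) \<le> 0 \<and>
     alpha xi < 0 \<and> alpha (g xi) < 0}"

end

theory Submission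
  imports Defs
begin

lemma g_Phi3:
  assumes "xi \<in> Phi4" "alpha xi < 0"
  shows "g xi \<in> Phi3"
proof -
  obtain tL dL tR dR where xi: "xi = (tL, dL, tR, dR)" by (cases xi) auto
  have h: "tL > \<bar>dL + 1\<bar>" "tR < - \<bar>dR + 1\<bar>" "dL < 0" "dR > 0"
    using assms(1) by (auto simp: Phi4_def Phi_def xi)
  have a: "tL * tR + (dL - 1) * (dR - 1) < 0" using assms(2) by (simp add: alpha_def xi)
  have p1: "tR\<^sup>2 - 2 * dR > \<bar>dR\<^sup>2 + 1\<bar>"
  proof -
    have "-tR > dR + 1" using h by auto
    hence "(-tR)^2 > (dR+1)^2" using h
      by (intro power_strict_mono) auto
    thus ?thesis by (simp add: power2_eq_square algebra_simps)
  qed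
  have p2: "tL * tR - dL - dR < - \<bar>dL * dR + 1\<bar>"
  proof (cases "dL * dR + 1 \<ge> 0")
    case True thus ?thesis using a by (simp add: algebra_simps)
  next
    case False
    have "tL * (-tR) > \<bar>dL + 1\<bar> * \<bar>dR + 1\<bar>"
    proof -
      have "tL * (-tR) > tL * \<bar>dR + 1\<bar>" using h by (intro mult_strict_left_mono) auto
      moreover have "tL * \<bar>dR + 1\<bar> \<ge> \<bar>dL + 1\<bar> * \<bar>dR + 1\<bar>" using h
        by (intro mult_right_mono) auto
      ultimately show ?thesis by linarith
    qed
    moreover have "\<bar>dL + 1\<bar> * \<bar>dR + 1\<bar> \<ge> - ((dL+1)*(dR+1))"
      by (metis abs_ge_minus_self abs_mult)
    ultimately have "tL * tR < (dL+1)*(dR+1)" by linarith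
    thus ?thesis using False by (simp add: algebra_simps)
  qed
  have "dR\<^sup>2 > 0" "dL * dR < 0" using h by (auto simp: mult_neg_pos)
  thus ?thesis using p1 p2 by (simp add: g_def xi Phi3_def Phi_def)
qed

theorem proposition9p1:
  fixes xi :: param and n :: nat
  assumes "n \<ge> 1" and "xi \<in> R4 n"
  shows "g xi \<in> R3 (n - 1)"
proof -
  have e1: "(g ^^ (n - 1)) (g xi) = (g ^^ n) xi" using assms(1)
    by (metis Suc_diff_le diff_Suc_1 funpow_Suc_right o_apply)
  have e2: "(g ^^ (n - 1 + 1)) (g xi) = (g ^^ (n + 1)) xi" using assms(1)
    by (metis Suc_eq_plus1 funpow_Suc_right o_apply le_add_diff_inverse2)
  show ?thesis using assms(2) g_Phi3[of xi] e1 e2 unfolding R4_def R3_def by auto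
qed

end
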